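(* Let $W\in\mathcal N$ with $\langle W,W\rangle=1$ and $W\notin\mathcal Z$, let $E_3=W\times E_2$, $w=\sqrt{\langle W,W\rangle_W}$, and let $f_1,f_2,f_3$ be the numbers $f_1=\langle [E_3,E_1],W\rangle_W$, $f_2=\tfrac12\big(\langle[E_3,W],E_2\rangle_W+\langle[E_3,E_2],W\rangle_W-\langle[E_3,W],W\rangle_W\langle X_0,E_2\rangle\big)$, $f_3=\tfrac12\big(\langle[E_3,W],E_2\rangle_W+\langle[E_2,E_3],W\rangle_W-\langle[E_3,W],W\rangle_W\langle X_0,E_2\rangle\big)$. Put $f_4=-\frac{f_1}{w}-f_2\langle X_0,E_2\rangle+\frac{3w}{4}\langle X_0,E_2\rangle$ and $f_5=\langle [E_2,E_3],E_2\rangle_W-\frac32 f_3\langle X_0,E_2\rangle$. Then the Chern–Rund connection $\nabla^W$ satisfies $$\nabla^W_{E_1}E_1=\frac{f_1}{w}E_3,\quad \nabla^W_{E_1}E_2=\nabla^W_{E_2}E_1=\frac{f_2}{w}E_3,\quad \nabla^W_{E_2}E_2=f_4E_3,$$ $$\nabla^W_{E_3}E_1=\nabla^W_{E_1}E_3+[E_3,E_1]=\frac{f_3}{w}E_2,$$ $$\nabla^W_{E_2}E_3=\nabla^W_{E_3}E_2+[E_2,E_3]=-\frac{f_2}{w}E_1+f_5E_2,$$ $$\nabla^W_{E_3}E_3=-\frac{f_3}{2}\langle X_0,E_2\rangle E_3.$$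
   Context: Let $\mathcal N$ be the 3-dimensional real Heisenberg Lie algebra with basis $(X,Y,Z)$ whose only nonzero brackets are $[X,Y]=-[Y,X]=Z$. Let $\langle\cdot,\cdot\rangle$ be the inner product on $\mathcal N$ for which $(X,Y,Z)$ is orthonormal, and $\mathcal Z=\operatorname{span}(Z)$ the center. Let $\times$ denote the cross product on $\mathcal N$ with respect to $\langle\cdot,\cdot\rangle$ and the orientation with $X\times Y=Z$. Fix $0<\xi<1$, put $X_0=\xi Z$, and consider the Randers Minkowski functional $f(U)=\sqrt{\langle U,U\rangle}+\langle X_0,U\rangle$ on $\mathcal N$ (extended by left translations to a left invariant Randers metric on the Heisenberg group). For nonzero $W\in\mathcal N$ define the osculating inner product $\langle U,V\rangle_W=\frac12\frac{\partial^2}{\partial s\,\partial t}f^2(W+sU+tV)\big|_{s=t=0}$ and the Cartan tensor $\mathcal C_W(U,V,T)=\frac14\frac{\partial^3}{\partial r\,\partial s\,\partial t}f^2(W+rU+sV+tT)\big|_{r=s=t=0}$. Define $\mathcal C^2_W(U,V)\in\mathcal N$ by requiring $\langle \mathcal C^2_W(U,V),T\rangle_W=\mathcal C_W(U,V,T)$ for all $T$. The Cartan vector $C_W$ is the unique vector with $\langle S,C_W\rangle_W=\operatorname{trace}\big(U\mapsto \mathcal C^2_W(S,U)\big)$ for all $S\in\mathcal N$; it is nonzero when $W\notin\mathcal Z$. Berwald–Moór frame vectors: $E_1=W/\sqrt{\langle W,W\rangle_W}$ and $E_2=C_W/\sqrt{\langle C_W,C_W\rangle_W}$. The (left invariant)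 Chern–Rund connection with reference vector $W$ is the bilinear map $\nabla^W:\mathcal N\times\mathcal N\to\mathcal N$ determined by: for all $U,V,T\in\mathcal N$, $$2\langle\nabla^W_UV,T\rangle_W=\langle[U,V],T\rangle_W-\langle[V,T],U\rangle_W+\langle[T,U],V\rangle_W-2\mathcal C_W(\nabla^W_UW,V,T)-2\mathcal C_W(\nabla^W_VW,T,U)+2\mathcal C_W(\nabla^W_TW,U,V).$$ *)

theory Defs
  imports "HOL-Analysis.Analysis" "HOL-Analysis.Cross3"
begin

text \<open>The Heisenberg Lie algebra N is modelled as real^3 with orthonormal basis
  X = axis 1 1, Y = axis 2 1, Z = axis 3 1 (standard inner product), and bracket
  [U,V] = (U1 V2 - U2 V1) Z, the bilinear extension of [X,Y] = Z.\<close>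

definition hX :: "real^3" where "hX = axis 1 1"
definition hY :: "real^3" where "hY = axis 2 1"
definition hZ :: "real^3" where "hZ = axis 3 1"

definition hbr :: "real^3 \<Rightarrow> real^3 \<Rightarrow> real^3" where
  "hbr U V = (U$1 * V$2 - U$2 * V$1) *\<^sub>R hZ"

definition X0 :: "real \<Rightarrow> real^3" where "X0 xi = xi *\<^sub>R hZ"

definition randers :: "real \<Rightarrow> real^3 \<Rightarrow> real" where
  "randers xi U = sqrt (U \<bullet> U) + X0 xi \<bullet> U"

definition osc :: "real \<Rightarrow> real^3 \<Rightarrow> real^3 \<Rightarrow> real^3 \<Rightarrow> real" where
  "osc xi W U V = 1/2 * deriv (\<lambda>s. deriv (\<lambda>t. (randers xi (W + s *\<^sub>R U + t *\<^sub>R V))\<^sup>2) 0) 0"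

definition cartan :: "real \<Rightarrow> real^3 \<Rightarrow> real^3 \<Rightarrow> real^3 \<Rightarrow> real^3 \<Rightarrow> real" where
  "cartan xi W U V T = 1/4 * deriv (\<lambda>r. deriv (\<lambda>s. deriv (\<lambda>t.
      (randers xi (W + r *\<^sub>R U + s *\<^sub>R V + t *\<^sub>R T))\<^sup>2) 0) 0) 0"

definition cartan2 :: "real \<Rightarrow> real^3 \<Rightarrow> real^3 \<Rightarrow> real^3 \<Rightarrow> real^3" where
  "cartan2 xi W U V = (THE C. \<forall>T. osc xi W C T = cartan xi W U V T)"

definition cartan_vec :: "real \<Rightarrow> real^3 \<Rightarrow> real^3" where
  "cartan_vec xi W = (THE C. \<forall>S. osc xi W S C =
      (\<Sum>i\<in>UNIV. cartan2 xi W S (axis i 1) $ i))"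

definition bmE1 :: "real \<Rightarrow> real^3 \<Rightarrow> real^3" where
  "bmE1 xi W = (1 / sqrt (osc xi W W W)) *\<^sub>R W"

definition bmE2 :: "real \<Rightarrow> real^3 \<Rightarrow> real^3" where
  "bmE2 xi W = (1 / sqrt (osc xi W (cartan_vec xi W) (cartan_vec xi W))) *\<^sub>R cartan_vec xi W"

definition chern_rund :: "real \<Rightarrow> real^3 \<Rightarrow> (real^3 \<Rightarrow> real^3 \<Rightarrow> real^3) \<Rightarrow> bool" where
  "chern_rund xi W nabla \<longleftrightarrow> bilinear nabla \<and>
     (\<forall>U V T. 2 * osc xi W (nabla U V) T =
        osc xi W (hbr U V) T - osc xi W (hbr V T) U + osc xi W (hbr T U) V
        - 2 * cartan xi W (nabla U W) V T - 2 * cartan xi W (nabla V W) T U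
        + 2 * cartan xi W (nabla T W) U V)"

end

theory Submission
  imports Defs
begin


lemma dsqrt:
  assumes "(q has_real_derivative q') (at x)" "q x > 0"
  shows "((\<lambda>t. sqrt (q t)) has_real_derivative q' / (2 * sqrt (q x))) (at x)"
  using DERIV_chain2[OF DERIV_real_sqrt[OF assms(2)] assms(1)]
  by (simp add: divide_simps mult.commute)

lemma G1:
  assumes "(n has_real_derivative n') (at 0)" "(l has_real_derivative l') (at 0)"
  shows "((\<lambda>t. (n t + l t)^2) has_real_derivative 2*(n 0 + l 0)*(n'+l')) (at 0)"
  using assms by (auto intro!: derivative_eq_intros)

lemma G2:
  assumes "(n has_real_derivative n') (at 0)" "n 0 = N" "N > 0"
  shows "((\<lambda>s. 2*(n s + (ca + s*cb))*((da + s*db)/n s + e)) has_real_derivative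
     2*(n'+cb)*(da/N + e) + 2*(N + ca)*((db*N - da*n')/N^2)) (at 0)"
  using assms by (auto intro!: derivative_eq_intros simp: power2_eq_square) (simp add: field_simps)

lemma G3:
  assumes "(n has_real_derivative m) (at 0)" "n 0 = 1"
  shows "((\<lambda>r. 2*((pa + r*pb)/n r + ea)*((qa + r*qb)/n r + eb) + 2*(n r + (ca + r*cb))*(k/n r - (pa + r*pb)*(qa + r*qb)/(n r)^3))
    has_real_derivative
    2*(pb - pa*m)*(qa+eb) + 2*(pa+ea)*(qb - qa*m) + 2*(m + cb)*(k - pa*qa) + 2*(1+ca)*(-k*m - (pb*qa + pa*qb) + 3*pa*qa*m)) (at 0)"
  apply (rule derivative_eq_intros refl assms(1) | simp add: assms(2))+
  by (simp add: assms(2) algebra_simps)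

definition DF :: "real \<Rightarrow> real^3 \<Rightarrow> real^3 \<Rightarrow> real" where
  "DF xi y V = 2 * (sqrt (y \<bullet> y) + X0 xi \<bullet> y) * ((y \<bullet> V) / sqrt (y \<bullet> y) + X0 xi \<bullet> V)"

definition D2F :: "real \<Rightarrow> real^3 \<Rightarrow> real^3 \<Rightarrow> real^3 \<Rightarrow> real" where
  "D2F xi y U V = 2 * ((y \<bullet> U) / sqrt (y \<bullet> y) + X0 xi \<bullet> U) * ((y \<bullet> V) / sqrt (y \<bullet> y) + X0 xi \<bullet> V)
     + 2 * (sqrt (y \<bullet> y) + X0 xi \<bullet> y) * ((U \<bullet> V) / sqrt (y \<bullet> y) - (y \<bullet> U) * (y \<bullet> V) / (sqrt (y \<bullet> y))^3)"

definition gW :: "real \<Rightarrow> real^3 \<Rightarrow> real^3 \<Rightarrow> real^3 \<Rightarrow> real" where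
  "gW xi W U V = ((W + X0 xi) \<bullet> U) * ((W + X0 xi) \<bullet> V) + (1 + X0 xi \<bullet> W) * (U \<bullet> V - (W \<bullet> U) * (W \<bullet> V))"

definition cW :: "real \<Rightarrow> real^3 \<Rightarrow> real^3 \<Rightarrow> real^3 \<Rightarrow> real^3 \<Rightarrow> real" where
  "cW xi W U V T = 1/2 * (((W + X0 xi) \<bullet> U) * (V \<bullet> T - (W \<bullet> V) * (W \<bullet> T))
     + ((W + X0 xi) \<bullet> V) * (U \<bullet> T - (W \<bullet> U) * (W \<bullet> T))
     + ((W + X0 xi) \<bullet> T) * (U \<bullet> V - (W \<bullet> U) * (W \<bullet> V))
     + (1 + X0 xi \<bullet> W) * (- (V \<bullet> T) * (W \<bullet> U) - (U \<bullet> V) * (W \<bullet> T) - (W \<bullet> V) * (U \<bullet> T)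
          + 3 * (W \<bullet> U) * (W \<bullet> V) * (W \<bullet> T)))"

lemma quad_eq: "(y + t *\<^sub>R V) \<bullet> (y + t *\<^sub>R V) = y \<bullet> y + 2*t*(y \<bullet> V) + t^2 * (V \<bullet> V)"
  for y V :: "real^3"
  by (simp add: inner_add_left inner_add_right inner_commute power2_eq_square algebra_simps)

lemma dquad: "((\<lambda>t. a + 2*t*b + t^2 * c) has_real_derivative 2*b) (at (0::real))"
  by (auto intro!: derivative_eq_intros)

lemma L1:
  fixes y V :: "real^3"
  assumes "y \<noteq> 0"
  shows "((\<lambda>t. (randers xi (y + t *\<^sub>R V))\<^sup>2) has_real_derivative DF xi y V) (at 0)"
proof -
  have yy: "y \<bullet> y > 0" using assms by simp
  have e: "(\<lambda>t. (randers xi (y + t *\<^sub>R V))\<^sup>2) =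
     (\<lambda>t. (sqrt (y \<bullet> y + 2*t*(y \<bullet> V) + t^2 * (V \<bullet> V)) + (X0 xi \<bullet> y + t * (X0 xi \<bullet> V)))\<^sup>2)"
    apply (rule ext) apply (simp only: randers_def quad_eq) by (simp add: inner_add_right)
  have n: "((\<lambda>t. sqrt (y \<bullet> y + 2*t*(y \<bullet> V) + t^2 * (V \<bullet> V))) has_real_derivative (y \<bullet> V) / sqrt (y \<bullet> y)) (at 0)"
    using dsqrt[OF dquad] yy by simp
  have l: "((\<lambda>t. X0 xi \<bullet> y + t * (X0 xi \<bullet> V)) has_real_derivative X0 xi \<bullet> V) (at 0)"
    by (auto intro!: derivative_eq_intros)
  show ?thesis unfolding e DF_def using G1[OF n l] by simp
qed

lemma L2:
  fixes y U V :: "real^3"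
  assumes "y \<noteq> 0"
  shows "((\<lambda>u. DF xi (y + u *\<^sub>R U) V) has_real_derivative D2F xi y U V) (at 0)"
proof -
  have yy: "y \<bullet> y > 0" using assms by simp
  have e: "(\<lambda>u. DF xi (y + u *\<^sub>R U) V) =
     (\<lambda>u. 2*(sqrt (y \<bullet> y + 2*u*(y \<bullet> U) + u^2 * (U \<bullet> U)) + (X0 xi \<bullet> y + u*(X0 xi \<bullet> U)))
          * ((y \<bullet> V + u*(U \<bullet> V)) / sqrt (y \<bullet> y + 2*u*(y \<bullet> U) + u^2 * (U \<bullet> U)) + X0 xi \<bullet> V))"
    apply (rule ext) apply (simp only: DF_def quad_eq) by (simp add: inner_add_right inner_add_left)
  have n: "((\<lambda>t. sqrt (y \<bullet> y + 2*t*(y \<bullet> U) + t^2 * (U \<bullet> U))) has_real_derivative (y \<bullet> U) / sqrt (y \<bullet> y)) (at 0)"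
    using dsqrt[OF dquad] yy by simp
  have N: "sqrt (y \<bullet> y) > 0" using yy by simp
  show ?thesis unfolding e 
    apply (rule DERIV_cong_ev[THEN iffD1, OF refl _ _ G2[OF n _ N, where ca="X0 xi \<bullet> y" and cb="X0 xi \<bullet> U" and da="y \<bullet> V" and db="U \<bullet> V" and e="X0 xi \<bullet> V"]])
    using N by (auto simp: D2F_def field_simps power2_eq_square power3_eq_cube)
qed

lemma L3:
  fixes W U V T :: "real^3"
  assumes "W \<bullet> W = 1"
  shows "((\<lambda>r. D2F xi (W + r *\<^sub>R U) V T) has_real_derivative 4 * cW xi W U V T) (at 0)"
proof -
  have e: "(\<lambda>r. D2F xi (W + r *\<^sub>R U) V T) =
     (\<lambda>r. 2*((W \<bullet> V + r*(U \<bullet> V))/sqrt (1 + 2*r*(W \<bullet> U) + r^2 * (U \<bullet> U)) + X0 xi \<bullet> V)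
          *((W \<bullet> T + r*(U \<bullet> T))/sqrt (1 + 2*r*(W \<bullet> U) + r^2 * (U \<bullet> U)) + X0 xi \<bullet> T)
        + 2*(sqrt (1 + 2*r*(W \<bullet> U) + r^2 * (U \<bullet> U)) + (X0 xi \<bullet> W + r*(X0 xi \<bullet> U)))
          *((V \<bullet> T)/sqrt (1 + 2*r*(W \<bullet> U) + r^2 * (U \<bullet> U))
            - (W \<bullet> V + r*(U \<bullet> V))*(W \<bullet> T + r*(U \<bullet> T))/(sqrt (1 + 2*r*(W \<bullet> U) + r^2 * (U \<bullet> U)))^3))"
    apply (rule ext) apply (simp only: D2F_def quad_eq assms) by (simp add: inner_add_right inner_add_left)
  have n: "((\<lambda>t. sqrt (1 + 2*t*(W \<bullet> U) + t^2 * (U \<bullet> U))) has_real_derivative (W \<bullet> U)) (at 0)"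
    using dsqrt[OF dquad, of 1] by simp
  show ?thesis unfolding e
    apply (rule DERIV_cong_ev[THEN iffD1, OF refl _ _ G3[OF n, where pa="W\<bullet>V" and pb="U\<bullet>V" and ea="X0 xi\<bullet>V" and qa="W\<bullet>T" and qb="U\<bullet>T" and eb="X0 xi\<bullet>T" and ca="X0 xi\<bullet>W" and cb="X0 xi\<bullet>U" and k="V\<bullet>T"]])
    by (auto simp: cW_def inner_add_left algebra_simps inner_commute)
qed
lemma deriv_ev:
  fixes f g :: "real \<Rightarrow> real"
  assumes "eventually (\<lambda>s. f s = g s) (nhds 0)" "(g has_real_derivative D) (at 0)"
  shows "deriv f 0 = D"
  using DERIV_cong_ev[OF refl assms(1) refl] assms(2) DERIV_imp_deriv by blast

lemma ev_nz:
  fixes y U :: "real^3"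
  assumes "y \<noteq> 0"
  shows "eventually (\<lambda>s::real. y + s *\<^sub>R U \<noteq> 0) (nhds 0)"
proof -
  have "((\<lambda>s::real. y + s *\<^sub>R U) \<longlongrightarrow> y + 0 *\<^sub>R U) (nhds 0)"
    by (intro tendsto_intros) (simp add: tendsto_ident_at filterlim_ident)
  then have "((\<lambda>s::real. y + s *\<^sub>R U) \<longlongrightarrow> y) (nhds 0)" by simp
  then show ?thesis using tendsto_imp_eventually_ne assms by blast
qed

lemma osc_gen:
  fixes y U V :: "real^3"
  assumes "y \<noteq> 0"
  shows "deriv (\<lambda>s. deriv (\<lambda>t. (randers xi (y + s *\<^sub>R U + t *\<^sub>R V))\<^sup>2) 0) 0 = D2F xi y U V"
proof (rule deriv_ev[OF _ L2[OF assms]])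
  show "\<forall>\<^sub>F s in nhds 0. deriv (\<lambda>t. (randers xi (y + s *\<^sub>R U + t *\<^sub>R V))\<^sup>2) 0 = DF xi (y + s *\<^sub>R U) V"
    using ev_nz[OF assms, of U] by (rule eventually_mono) (rule DERIV_imp_deriv[OF L1])
qed

lemma osc_eq:
  fixes W U V :: "real^3"
  assumes "W \<bullet> W = 1"
  shows "osc xi W U V = gW xi W U V"
proof -
  have "W \<noteq> 0" using assms by auto
  then show ?thesis unfolding osc_def osc_gen[OF \<open>W \<noteq> 0\<close>]
    by (simp add: D2F_def gW_def assms inner_add_left algebra_simps)
qed

lemma cartan_eq:
  fixes W U V T :: "real^3"
  assumes "W \<bullet> W = 1"
  shows "cartan xi W U V T = cW xi W U V T"
proof -
  have "W \<noteq> 0" using assms by auto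
  have "deriv (\<lambda>r. deriv (\<lambda>s. deriv (\<lambda>t.
      (randers xi (W + r *\<^sub>R U + s *\<^sub>R V + t *\<^sub>R T))\<^sup>2) 0) 0) 0 = 4 * cW xi W U V T"
  proof (rule deriv_ev[OF _ L3[OF assms]])
    show "\<forall>\<^sub>F r in nhds 0. deriv (\<lambda>s. deriv (\<lambda>t.
      (randers xi (W + r *\<^sub>R U + s *\<^sub>R V + t *\<^sub>R T))\<^sup>2) 0) 0 = D2F xi (W + r *\<^sub>R U) V T"
      using ev_nz[OF \<open>W \<noteq> 0\<close>, of U] by (rule eventually_mono) (rule osc_gen)
  qed
  then show ?thesis unfolding cartan_def by simp
qed




definition rho :: "real^3 \<Rightarrow> real" where "rho W = sqrt ((W$1)^2 + (W$2)^2)"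
definition fA :: "real^3 \<Rightarrow> real^3" where "fA W = vector [-(W$2)/rho W, W$1/rho W, 0]"
definition fB :: "real^3 \<Rightarrow> real^3" where "fB W = vector [-(W$3)*(W$1)/rho W, -(W$3)*(W$2)/rho W, rho W]"

locale frm =
  fixes W :: "real^3"
  assumes W1: "W \<bullet> W = 1" and rp: "rho W > 0"
begin

abbreviation "A \<equiv> fA W"
abbreviation "B \<equiv> fB W"
abbreviation "r \<equiv> W$3"
abbreviation "\<rho> \<equiv> rho W"

lemma rho2: "\<rho>^2 = (W$1)^2 + (W$2)^2"
  unfolding rho_def by simp

lemma comp1: "(W$1)^2 + (W$2)^2 + (W$3)^2 = 1"
  using W1 by (simp add: inner_vec_def sum_3 power2_eq_square)

lemma r2: "r^2 = 1 - \<rho>^2" using comp1 rho2 by simp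

lemmas cs = inner_vec_def sum_3 fA_def fB_def vector_3 vec_eq_iff forall_3

lemma pp: "\<rho>*\<rho> = W$1*W$1 + W$2*W$2" using rho2 by (simp add: power2_eq_square)
lemma rr: "W$3*W$3 = 1 - \<rho>*\<rho>" using r2 by (simp add: power2_eq_square)
lemma rnz: "\<rho> \<noteq> 0" using rp by simp

lemma WA: "W \<bullet> A = 0" using rnz by (simp add: cs field_simps)
lemma WB: "W \<bullet> B = 0" using rnz apply (simp add: cs field_simps) using pp rr by algebra
lemma AB: "A \<bullet> B = 0" using rnz by (simp add: cs field_simps)
lemma AA: "A \<bullet> A = 1" using rnz apply (simp add: cs field_simps) using pp rr by algebra
lemma BB: "B \<bullet> B = 1" using rnz apply (simp add: cs field_simps) using pp rr by algebra

lemma BW: "B \<bullet> W = 0" using WB by (simp add: inner_commute)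
lemma AW: "A \<bullet> W = 0" using WA by (simp add: inner_commute)
lemma BA: "B \<bullet> A = 0" using AB by (simp add: inner_commute)
lemmas fip = W1 WA WB AB AA BB BW AW BA

lemma expand: "U = (U \<bullet> W) *\<^sub>R W + (U \<bullet> A) *\<^sub>R A + (U \<bullet> B) *\<^sub>R B"
  using rnz apply (simp add: cs field_simps) using pp rr by (((rule conjI)+)?; algebra)

lemma inner_exp: "U \<bullet> V = (U \<bullet> W)*(V \<bullet> W) + (U \<bullet> A)*(V \<bullet> A) + (U \<bullet> B)*(V \<bullet> B)"
proof -
  have "U \<bullet> V = ((U \<bullet> W) *\<^sub>R W + (U \<bullet> A) *\<^sub>R A + (U \<bullet> B) *\<^sub>R B) \<bullet> V"
    using expand[of U] by simp
  also have "\<dots> = (U \<bullet> W)*(W \<bullet> V) + (U \<bullet> A)*(A \<bullet> V) + (U \<bullet> B)*(B \<bullet> V)"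
    by (simp only: inner_add_left inner_scaleR_left)
  finally show ?thesis by (simp add: inner_commute)
qed

lemma frame_eq:
  assumes "X \<bullet> W = Y \<bullet> W" "X \<bullet> A = Y \<bullet> A" "X \<bullet> B = Y \<bullet> B"
  shows "X = Y"
  using expand[of X] expand[of Y] assms by simp

lemma hZ_eq: "hZ = r *\<^sub>R W + \<rho> *\<^sub>R B"
  using rnz unfolding hZ_def apply (simp add: cs axis_def field_simps) using pp rr by algebra

lemma X0_eq: "X0 xi = (xi*r) *\<^sub>R W + (xi*\<rho>) *\<^sub>R B"
  unfolding X0_def hZ_eq by (simp add: algebra_simps)

lemma crossWA: "cross3 W A = B"
  using rnz unfolding cross3_def apply (simp add: cs field_simps) using pp rr by (((rule conjI)+)?; algebra)

lemma crossWB: "cross3 W B = - A"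
  using rnz unfolding cross3_def apply (simp add: cs field_simps) using pp rr by (((rule conjI)+)?; algebra)

lemma hbr_coord: "hbr U V = (r*((U \<bullet> A)*(V \<bullet> B) - (U \<bullet> B)*(V \<bullet> A)) + \<rho>*((U \<bullet> W)*(V \<bullet> A) - (U \<bullet> A)*(V \<bullet> W))) *\<^sub>R hZ"
proof -
  have "U$1 * V$2 - U$2 * V$1 = r*((U \<bullet> A)*(V \<bullet> B) - (U \<bullet> B)*(V \<bullet> A)) + \<rho>*((U \<bullet> W)*(V \<bullet> A) - (U \<bullet> A)*(V \<bullet> W))"
    using rnz apply (simp add: cs field_simps) using pp rr by algebra
  then show ?thesis unfolding hbr_def by simp
qed

end



locale frm2 = frm +
  fixes xi :: real
  assumes xi0: "0 < xi" and xi1: "xi < 1"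
begin

definition "w = 1 + xi * r"
definition "c = xi * \<rho>"
definition "hw = sqrt w"

lemma r_le: "\<bar>r\<bar> \<le> 1"
proof -
  have "r^2 \<le> 1" using r2 by simp
  then show ?thesis using abs_le_square_iff[of r 1] by simp
qed

lemma w_pos: "w > 0"
proof -
  have "-1 \<le> r" using r_le by linarith
  then have "xi * (-1) \<le> xi * r" using xi0 by (intro mult_left_mono) auto
  then show ?thesis unfolding w_def using xi1 by linarith
qed

lemma hw_pos: "hw > 0" using w_pos hw_def by simp
lemma hw2: "hw * hw = w" using w_pos hw_def by simp
lemma w_hw: "w = hw * hw" using hw2 by simp
lemma hw_nz: "hw \<noteq> 0" using hw_pos by simp
lemma c_pos: "c > 0" using xi0 rp c_def by simp

lemma lU: "(W + X0 xi) \<bullet> U = w*(U \<bullet> W) + c*(U \<bullet> B)"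
  unfolding X0_eq w_def c_def by (simp add: inner_add_left inner_commute algebra_simps)

lemma X0W: "X0 xi \<bullet> W = xi * r"
  unfolding X0_eq by (simp add: inner_add_left fip)

lemma prj: "U \<bullet> V - (W \<bullet> U)*(W \<bullet> V) = (U \<bullet> A)*(V \<bullet> A) + (U \<bullet> B)*(V \<bullet> B)"
  using inner_exp[of U V] by (simp add: inner_commute)

lemma gW_coord: "gW xi W U V = (w*(U \<bullet> W) + c*(U \<bullet> B))*(w*(V \<bullet> W) + c*(V \<bullet> B)) + w*((U \<bullet> A)*(V \<bullet> A) + (U \<bullet> B)*(V \<bullet> B))"
  unfolding gW_def lU X0W prj by (simp add: w_def)

lemma cW_coord: "cW xi W U V T = 1/2 * (
     (w*(U \<bullet> W) + c*(U \<bullet> B)) * ((V \<bullet> A)*(T \<bullet> A) + (V \<bullet> B)*(T \<bullet> B))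
   + (w*(V \<bullet> W) + c*(V \<bullet> B)) * ((U \<bullet> A)*(T \<bullet> A) + (U \<bullet> B)*(T \<bullet> B))
   + (w*(T \<bullet> W) + c*(T \<bullet> B)) * ((U \<bullet> A)*(V \<bullet> A) + (U \<bullet> B)*(V \<bullet> B))
   + w * (- ((V \<bullet> W)*(T \<bullet> W) + (V \<bullet> A)*(T \<bullet> A) + (V \<bullet> B)*(T \<bullet> B)) * (U \<bullet> W)
          - ((U \<bullet> W)*(V \<bullet> W) + (U \<bullet> A)*(V \<bullet> A) + (U \<bullet> B)*(V \<bullet> B)) * (T \<bullet> W)
          - (V \<bullet> W) * ((U \<bullet> W)*(T \<bullet> W) + (U \<bullet> A)*(T \<bullet> A) + (U \<bullet> B)*(T \<bullet> B))
          + 3*(U \<bullet> W)*(V \<bullet> W)*(T \<bullet> W)))"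
  unfolding cW_def lU X0W prj
  by (simp only: inner_exp[of V T] inner_exp[of U V] inner_exp[of U T] inner_commute[of W] w_def[symmetric])

definition "e1 = (1/w) *\<^sub>R W"
definition "e2 = (1/hw) *\<^sub>R B + (- c/(w * hw)) *\<^sub>R W"
definition "e3 = (-1/hw) *\<^sub>R A"

lemma ip: 
  "e1 \<bullet> W = 1/w" "e1 \<bullet> A = 0" "e1 \<bullet> B = 0"
  "e2 \<bullet> W = - c/(w * hw)" "e2 \<bullet> A = 0" "e2 \<bullet> B = 1/hw"
  "e3 \<bullet> W = 0" "e3 \<bullet> A = -1/hw" "e3 \<bullet> B = 0"
  "W \<bullet> W = 1" "W \<bullet> A = 0" "W \<bullet> B = 0"
  "B \<bullet> W = 0" "B \<bullet> A = 0" "B \<bullet> B = 1"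
  "A \<bullet> W = 0" "A \<bullet> A = 1" "A \<bullet> B = 0"
  by (simp_all add: e1_def e2_def e3_def inner_add_left inner_diff_left fip)

lemma hZip: "hZ \<bullet> W = r" "hZ \<bullet> A = 0" "hZ \<bullet> B = \<rho>"
  using ip by (simp_all add: hZ_eq inner_add_left)

lemma X0ip: "X0 xi \<bullet> W = xi*r" "X0 xi \<bullet> A = 0" "X0 xi \<bullet> B = c"
  using ip by (simp_all add: X0_eq inner_add_left c_def)

lemma gon:
  "gW xi W e1 e1 = 1" "gW xi W e1 e2 = 0" "gW xi W e1 e3 = 0"
  "gW xi W e2 e1 = 0" "gW xi W e2 e2 = 1" "gW xi W e2 e3 = 0"
  "gW xi W e3 e1 = 0" "gW xi W e3 e2 = 0" "gW xi W e3 e3 = 1"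
  using w_pos hw_pos hw2 by (simp_all add: gW_coord ip field_simps)

end



context frm2 begin

lemma gsym: "gW xi W U V = gW xi W V U"
  unfolding gW_def by (simp add: inner_commute)

lemma g_add1: "gW xi W (X + Y) T = gW xi W X T + gW xi W Y T"
  by (simp add: gW_coord inner_add_left algebra_simps)
lemma g_scale1: "gW xi W (a *\<^sub>R X) T = a * gW xi W X T"
  by (simp add: gW_coord algebra_simps)
lemma g_add2: "gW xi W T (X + Y) = gW xi W T X + gW xi W T Y"
  by (simp add: gW_coord inner_add_left algebra_simps)
lemma g_scale2: "gW xi W T (a *\<^sub>R X) = a * gW xi W T X"
  by (simp add: gW_coord algebra_simps)

lemma c_add1: "cW xi W (X + Y) U V = cW xi W X U V + cW xi W Y U V"
  unfolding cW_def by (simp add: inner_add_left inner_add_right algebra_simps)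
lemma c_scale1: "cW xi W (a *\<^sub>R X) U V = a * cW xi W X U V"
  unfolding cW_def by (simp add: algebra_simps)
lemma c_add2: "cW xi W U (X + Y) V = cW xi W U X V + cW xi W U Y V"
  unfolding cW_def by (simp add: inner_add_left inner_add_right algebra_simps)
lemma c_scale2: "cW xi W U (a *\<^sub>R X) V = a * cW xi W U X V"
  unfolding cW_def by (simp add: algebra_simps)
lemma c_add3: "cW xi W U V (X + Y) = cW xi W U V X + cW xi W U V Y"
  unfolding cW_def by (simp add: inner_add_left inner_add_right algebra_simps)
lemma c_scale3: "cW xi W U V (a *\<^sub>R X) = a * cW xi W U V X"
  unfolding cW_def by (simp add: algebra_simps)

lemma gexp: "X = gW xi W X e1 *\<^sub>R e1 + gW xi W X e2 *\<^sub>R e2 + gW xi W X e3 *\<^sub>R e3"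
  apply (rule frame_eq)
  apply (simp_all only: gW_coord ip inner_add_left inner_scaleR_left)
  using hw_nz by (simp_all add: w_hw field_simps)

lemma guniq: 
  assumes "gW xi W X e1 = gW xi W Y e1" "gW xi W X e2 = gW xi W Y e2" "gW xi W X e3 = gW xi W Y e3"
  shows "X = Y"
  using gexp[of X] gexp[of Y] assms by simp

definition "Q S U = cW xi W S U e1 *\<^sub>R e1 + cW xi W S U e2 *\<^sub>R e2 + cW xi W S U e3 *\<^sub>R e3"

lemma Q_prop: "gW xi W (Q S U) T = cW xi W S U T"
proof -
  have "cW xi W S U T = cW xi W S U (gW xi W T e1 *\<^sub>R e1 + gW xi W T e2 *\<^sub>R e2 + gW xi W T e3 *\<^sub>R e3)"
    using gexp[of T] by simp
  also have "\<dots> = gW xi W T e1 * cW xi W S U e1 + gW xi W T e2 * cW xi W S U e2 + gW xi W T e3 * cW xi W S U e3"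
    by (simp add: c_add3 c_scale3)
  finally show ?thesis unfolding Q_def
    by (simp add: g_add1 g_scale1 gsym[of _ T] g_add2 g_scale2 algebra_simps)
qed

lemma cartan2_eq: "cartan2 xi W S U = Q S U"
  unfolding cartan2_def osc_eq[OF W1] cartan_eq[OF W1]
proof (rule the_equality)
  show "\<forall>T. gW xi W (Q S U) T = cW xi W S U T" by (simp add: Q_prop)
  fix C assume "\<forall>T. gW xi W C T = cW xi W S U T"
  then show "C = Q S U" by (intro guniq) (simp_all add: Q_prop)
qed

lemma axis_exp: "X = X$1 *\<^sub>R axis 1 1 + X$2 *\<^sub>R axis 2 1 + X$3 *\<^sub>R axis 3 (1::real)"
  for X :: "real^3"
  by (simp add: vec_eq_iff forall_3 axis_def)

lemma lin_sum2: "(\<Sum>i\<in>UNIV. X$i * cW xi W S (axis i 1) T) = cW xi W S X T"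
proof -
  have "cW xi W S X T = cW xi W S (X$1 *\<^sub>R axis 1 1 + X$2 *\<^sub>R axis 2 1 + X$3 *\<^sub>R axis 3 1) T"
    using axis_exp[of X] by simp
  then show ?thesis by (simp add: sum_3 c_add2 c_scale2)
qed

lemma trace_eq: "(\<Sum>i\<in>UNIV. cartan2 xi W S (axis i 1) $ i) =
   cW xi W S e1 e1 + cW xi W S e2 e2 + cW xi W S e3 e3"
proof -
  have "(\<Sum>i\<in>UNIV. cartan2 xi W S (axis i 1) $ i) =
     (\<Sum>i\<in>UNIV. e1$i * cW xi W S (axis i 1) e1) + (\<Sum>i\<in>UNIV. e2$i * cW xi W S (axis i 1) e2)
     + (\<Sum>i\<in>UNIV. e3$i * cW xi W S (axis i 1) e3)"
    unfolding cartan2_eq Q_def by (simp add: sum.distrib algebra_simps)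
  then show ?thesis by (simp only: lin_sum2)
qed

definition "K = (2*c*hw/w^2) *\<^sub>R e2"

lemma K_prop: "gW xi W S K = cW xi W S e1 e1 + cW xi W S e2 e2 + cW xi W S e3 e3"
  unfolding K_def
  apply (simp only: gW_coord cW_coord ip inner_scaleR_left)
  using hw_nz by (simp add: w_hw field_simps) (simp add: eval_nat_numeral)

end



context frm2 begin

lemma cvec_eq: "cartan_vec xi W = K"
  unfolding cartan_vec_def osc_eq[OF W1]
proof (rule the_equality)
  show "\<forall>S. gW xi W S K = (\<Sum>i\<in>UNIV. cartan2 xi W S (axis i 1) $ i)"
    by (simp add: trace_eq K_prop)
  fix C assume h: "\<forall>S. gW xi W S C = (\<Sum>i\<in>UNIV. cartan2 xi W S (axis i 1) $ i)"
  show "C = K"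
    by (rule guniq) (use h in \<open>simp_all add: gsym[of C] gsym[of K] trace_eq K_prop\<close>)
qed

lemma gWW: "gW xi W W W = w^2"
  by (simp add: gW_coord fip power2_eq_square)

lemma bmE1_eq: "bmE1 xi W = e1"
  unfolding bmE1_def osc_eq[OF W1] gWW e1_def using w_pos by simp

lemma KK: "gW xi W K K = (2*c*hw/w^2)^2"
  unfolding K_def by (simp add: g_scale1 g_scale2 gon power2_eq_square)

lemma bmE2_eq: "bmE2 xi W = e2"
proof -
  have p: "2*c*hw/w^2 > 0" using c_pos hw_pos w_pos by simp
  have "sqrt (gW xi W K K) = 2*c*hw/w^2" unfolding KK by (rule real_sqrt_unique) (use p in auto)
  then show ?thesis unfolding bmE2_def osc_eq[OF W1] cvec_eq
    using p c_pos hw_pos w_pos by (simp add: K_def)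
qed

lemma cross_e2: "cross3 W e2 = e3"
  unfolding e2_def e3_def cross_add_right cross_mult_right crossWB cross_refl by simp

lemma sqrt_gWW: "sqrt (gW xi W W W) = w"
  unfolding gWW using w_pos by simp

lemma X0e2: "X0 xi \<bullet> e2 = c/(w*hw)"
proof -
  have "X0 xi \<bullet> e2 = (xi*r)*(e2 \<bullet> W) + (xi*\<rho>)*(e2 \<bullet> B)"
    unfolding X0_eq by (simp add: inner_add_right inner_commute[of _ e2])
  also have "\<dots> = c/(w*hw)" unfolding ip using w_pos hw_pos
    by (simp add: c_def field_simps) (simp add: w_def algebra_simps)
  finally show ?thesis .
qed

end



context frm2 begin

lemma hwr: "hw*hw = 1 + xi*r" using hw2 w_def by simp

lemma c_sym12: "cW xi W U V T = cW xi W V U T" unfolding cW_def by (simp add: inner_commute algebra_simps)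
lemma c_sym23: "cW xi W U V T = cW xi W U T V" unfolding cW_def by (simp add: inner_commute algebra_simps)

lemma c_e1: "cW xi W e1 V T = 0"
  apply (simp only: cW_coord ip)
  using w_pos hw_pos by (simp add: field_simps)

lemma c_e1': "cW xi W V e1 T = 0" "cW xi W V T e1 = 0"
  using c_e1 c_sym12 c_sym23 by metis+

definition "aa = c/(w*hw)"

lemma ctab:
  "cW xi W e2 e2 e2 = 3/2*aa"
  "cW xi W e2 e2 e3 = 0" "cW xi W e2 e3 e2 = 0" "cW xi W e3 e2 e2 = 0"
  "cW xi W e2 e3 e3 = aa/2" "cW xi W e3 e2 e3 = aa/2" "cW xi W e3 e3 e2 = aa/2"
  "cW xi W e3 e3 e3 = 0"
  unfolding aa_def
  by (simp_all only: cW_coord ip; use w_pos hw_nz in \<open>simp add: w_hw field_simps\<close>)+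

lemma W_e1: "W = w *\<^sub>R e1" unfolding e1_def using w_pos by simp

lemma gZ:
  "gW xi W hZ W = (w*r + c*\<rho>)*w"
  "gW xi W hZ e1 = w*r + c*\<rho>"
  "gW xi W hZ e2 = w*\<rho>/hw"
  "gW xi W hZ e3 = 0"
  by (simp_all only: gW_coord ip hZip; use w_pos hw_nz in \<open>simp add: w_hw field_simps\<close>)+

end



context frm2 begin

lemma id1:
  assumes CR: "chern_rund xi W nabla"
  shows "2 * gW xi W (nabla U V) T = gW xi W (hbr U V) T - gW xi W (hbr V T) U + gW xi W (hbr T U) V
     - 2*w*(gW xi W (nabla U e1) e2 * cW xi W e2 V T + gW xi W (nabla U e1) e3 * cW xi W e3 V T)
     - 2*w*(gW xi W (nabla V e1) e2 * cW xi W e2 T U + gW xi W (nabla V e1) e3 * cW xi W e3 T U)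
     + 2*w*(gW xi W (nabla T e1) e2 * cW xi W e2 U V + gW xi W (nabla T e1) e3 * cW xi W e3 U V)"
proof -
  have bil: "bilinear nabla" and idt: "\<And>U V T. 2 * osc xi W (nabla U V) T =
        osc xi W (hbr U V) T - osc xi W (hbr V T) U + osc xi W (hbr T U) V
        - 2 * cartan xi W (nabla U W) V T - 2 * cartan xi W (nabla V W) T U
        + 2 * cartan xi W (nabla T W) U V"
    using CR unfolding chern_rund_def by blast+
  have cexp: "cW xi W Y V T = gW xi W Y e2 * cW xi W e2 V T + gW xi W Y e3 * cW xi W e3 V T" for Y V T
  proof -
    have "cW xi W Y V T = cW xi W (gW xi W Y e1 *\<^sub>R e1 + gW xi W Y e2 *\<^sub>R e2 + gW xi W Y e3 *\<^sub>R e3) V T"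
      using gexp[of Y] by simp
    then show ?thesis by (simp add: c_add1 c_scale1 c_e1)
  qed
  have cW': "cW xi W (nabla X W) V T = w * (gW xi W (nabla X e1) e2 * cW xi W e2 V T + gW xi W (nabla X e1) e3 * cW xi W e3 V T)" for X V T
    using cexp[of "nabla X e1"] by (subst W_e1) (simp add: bilinear_rmul[OF bil] c_scale1)
  show ?thesis using idt[of U V T] unfolding osc_eq[OF W1] cartan_eq[OF W1] cW' by (simp add: algebra_simps)
qed

lemma g_zero: "gW xi W 0 T = 0" "gW xi W T 0 = 0" by (simp_all add: gW_def)
lemma g_neg1: "gW xi W (- X) T = - gW xi W X T" by (simp add: gW_def algebra_simps)

lemma g_diff1: "gW xi W (X - Y) T = gW xi W X T - gW xi W Y T" by (simp add: gW_def algebra_simps inner_diff_left)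

lemmas SIM = g_zero g_neg1 hbr_coord g_scale1 g_add1 gZ ip gon ctab c_e1 c_e1' X0e2

lemma solve2: "2*x = E \<Longrightarrow> E = 2*F \<Longrightarrow> x = (F::real)" by simp

lemma hbr_anti: "hbr V U = - hbr U V" unfolding hbr_def by (simp add: algebra_simps)

lemma tors:
  assumes CR: "chern_rund xi W nabla"
  shows "nabla U V = nabla V U + hbr U V"
proof -
  have "gW xi W (nabla U V) T = gW xi W (nabla V U) T + gW xi W (hbr U V) T" for T
    using id1[OF CR, of U V T] id1[OF CR, of V U T]
    unfolding hbr_anti[of V U] hbr_anti[of T V] hbr_anti[of U T] g_neg1
      c_sym23[of e2 U T] c_sym23[of e2 T V] c_sym23[of e2 V U] c_sym23[of e3 U T] c_sym23[of e3 T V] c_sym23[of e3 V U]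
    by linarith
  then show ?thesis by (intro guniq) (simp_all add: g_add1)
qed

lemma main_loc:
  assumes CR: "chern_rund xi W nabla"
  defines "a \<equiv> X0 xi \<bullet> e2"
  defines "f1 \<equiv> gW xi W (hbr e3 e1) W"
  defines "f2 \<equiv> 1/2 * (gW xi W (hbr e3 W) e2 + gW xi W (hbr e3 e2) W - gW xi W (hbr e3 W) W * a)"
  defines "f3 \<equiv> 1/2 * (gW xi W (hbr e3 W) e2 + gW xi W (hbr e2 e3) W - gW xi W (hbr e3 W) W * a)"
  defines "f4 \<equiv> - f1 / w - f2 * a + 3 * w / 4 * a"
  defines "f5 \<equiv> gW xi W (hbr e2 e3) e2 - 3/2 * f3 * a"
  shows "nabla e1 e1 = (f1 / w) *\<^sub>R e3
          \<and> nabla e1 e2 = (f2 / w) *\<^sub>R e3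
          \<and> nabla e2 e1 = (f2 / w) *\<^sub>R e3
          \<and> nabla e2 e2 = f4 *\<^sub>R e3
          \<and> nabla e3 e1 = nabla e1 e3 + hbr e3 e1
          \<and> nabla e3 e1 = (f3 / w) *\<^sub>R e2
          \<and> nabla e2 e3 = nabla e3 e2 + hbr e2 e3
          \<and> nabla e2 e3 = (- f2 / w) *\<^sub>R e1 + f5 *\<^sub>R e2
          \<and> nabla e3 e3 = (- f3 / 2 * a) *\<^sub>R e3"
proof -
  note defs = a_def f1_def f2_def f3_def f4_def f5_def
  have n111: "gW xi W (nabla e1 e1) e1 = 0"
    apply (rule solve2[OF id1[OF CR, of e1 e1 e1]])
    unfolding defs by (simp add: SIM defs  aa_def c_def w_hw hw_nz, ((simp add: field_simps hw_nz)?), ((insert hwr rr, algebra)?))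
  have n112: "gW xi W (nabla e1 e1) e2 = 0"
    apply (rule solve2[OF id1[OF CR, of e1 e1 e2]])
    unfolding defs by (simp add: SIM defs n111 aa_def c_def w_hw hw_nz, ((simp add: field_simps hw_nz)?), ((insert hwr rr, algebra)?))
  have n113: "gW xi W (nabla e1 e1) e3 = f1/w"
    apply (rule solve2[OF id1[OF CR, of e1 e1 e3]])
    unfolding defs by (simp add: SIM defs n111 n112 aa_def c_def w_hw hw_nz, ((simp add: field_simps hw_nz)?), ((insert hwr rr, algebra)?))
  have n211: "gW xi W (nabla e2 e1) e1 = 0"
    apply (rule solve2[OF id1[OF CR, of e2 e1 e1]])
    unfolding defs by (simp add: SIM defs n111 n112 n113 aa_def c_def w_hw hw_nz, ((simp add: field_simps hw_nz)?), ((insert hwr rr, algebra)?))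
  have n212: "gW xi W (nabla e2 e1) e2 = 0"
    apply (rule solve2[OF id1[OF CR, of e2 e1 e2]])
    unfolding defs by (simp add: SIM defs n111 n112 n113 n211 aa_def c_def w_hw hw_nz, ((simp add: field_simps hw_nz)?), ((insert hwr rr, algebra)?))
  have n213: "gW xi W (nabla e2 e1) e3 = f2/w"
    apply (rule solve2[OF id1[OF CR, of e2 e1 e3]])
    unfolding defs by (simp add: SIM defs n111 n112 n113 n211 n212 aa_def c_def w_hw hw_nz, ((simp add: field_simps hw_nz)?), ((insert hwr rr, algebra)?))
  have n311: "gW xi W (nabla e3 e1) e1 = 0"
    apply (rule solve2[OF id1[OF CR, of e3 e1 e1]])
    unfolding defs by (simp add: SIM defs n111 n112 n113 n211 n212 n213 aa_def c_def w_hw hw_nz, ((simp add: field_simps hw_nz)?), ((insert hwr rr, algebra)?))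
  have n312: "gW xi W (nabla e3 e1) e2 = f3/w"
    apply (rule solve2[OF id1[OF CR, of e3 e1 e2]])
    unfolding defs by (simp add: SIM defs n111 n112 n113 n211 n212 n213 n311 aa_def c_def w_hw hw_nz, ((simp add: field_simps hw_nz)?), ((insert hwr rr, algebra)?))
  have n313: "gW xi W (nabla e3 e1) e3 = 0"
    apply (rule solve2[OF id1[OF CR, of e3 e1 e3]])
    unfolding defs by (simp add: SIM defs n111 n112 n113 n211 n212 n213 n311 n312 aa_def c_def w_hw hw_nz, ((simp add: field_simps hw_nz)?), ((insert hwr rr, algebra)?))
  have n121: "gW xi W (nabla e1 e2) e1 = 0"
    apply (rule solve2[OF id1[OF CR, of e1 e2 e1]])
    unfolding defs by (simp add: SIM defs n111 n112 n113 n211 n212 n213 n311 n312 n313 aa_def c_def w_hw hw_nz, ((simp add: field_simps hw_nz)?), ((insert hwr rr, algebra)?))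
  have n122: "gW xi W (nabla e1 e2) e2 = 0"
    apply (rule solve2[OF id1[OF CR, of e1 e2 e2]])
    unfolding defs by (simp add: SIM defs n111 n112 n113 n211 n212 n213 n311 n312 n313 aa_def c_def w_hw hw_nz, ((simp add: field_simps hw_nz)?), ((insert hwr rr, algebra)?))
  have n123: "gW xi W (nabla e1 e2) e3 = f2/w"
    apply (rule solve2[OF id1[OF CR, of e1 e2 e3]])
    unfolding defs by (simp add: SIM defs n111 n112 n113 n211 n212 n213 n311 n312 n313 aa_def c_def w_hw hw_nz, ((simp add: field_simps hw_nz)?), ((insert hwr rr, algebra)?))
  have n221: "gW xi W (nabla e2 e2) e1 = 0"
    apply (rule solve2[OF id1[OF CR, of e2 e2 e1]])
    unfolding defs by (simp add: SIM defs n111 n112 n113 n211 n212 n213 n311 n312 n313 aa_def c_def w_hw hw_nz, ((simp add: field_simps hw_nz)?), ((insert hwr rr, algebra)?))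
  have n222: "gW xi W (nabla e2 e2) e2 = 0"
    apply (rule solve2[OF id1[OF CR, of e2 e2 e2]])
    unfolding defs by (simp add: SIM defs n111 n112 n113 n211 n212 n213 n311 n312 n313 aa_def c_def w_hw hw_nz, ((simp add: field_simps hw_nz)?), ((insert hwr rr, algebra)?))
  have n223: "gW xi W (nabla e2 e2) e3 = f4"
    apply (rule solve2[OF id1[OF CR, of e2 e2 e3]])
    unfolding defs by (simp add: SIM defs n111 n112 n113 n211 n212 n213 n311 n312 n313 aa_def c_def w_hw hw_nz, ((simp add: field_simps hw_nz)?), ((insert hwr rr, algebra)?))
  have n231: "gW xi W (nabla e2 e3) e1 = -f2/w"
    apply (rule solve2[OF id1[OF CR, of e2 e3 e1]])
    unfolding defs by (simp add: SIM defs n111 n112 n113 n211 n212 n213 n311 n312 n313 aa_def c_def w_hw hw_nz, ((simp add: field_simps hw_nz)?), ((insert hwr rr, algebra)?))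
  have n232: "gW xi W (nabla e2 e3) e2 = f5"
    apply (rule solve2[OF id1[OF CR, of e2 e3 e2]])
    unfolding defs by (simp add: SIM defs n111 n112 n113 n211 n212 n213 n311 n312 n313 aa_def c_def w_hw hw_nz, ((simp add: field_simps hw_nz)?), ((insert hwr rr, algebra)?))
  have n233: "gW xi W (nabla e2 e3) e3 = 0"
    apply (rule solve2[OF id1[OF CR, of e2 e3 e3]])
    unfolding defs by (simp add: SIM defs n111 n112 n113 n211 n212 n213 n311 n312 n313 aa_def c_def w_hw hw_nz, ((simp add: field_simps hw_nz)?), ((insert hwr rr, algebra)?))
  have n331: "gW xi W (nabla e3 e3) e1 = 0"
    apply (rule solve2[OF id1[OF CR, of e3 e3 e1]])
    unfolding defs by (simp add: SIM defs n111 n112 n113 n211 n212 n213 n311 n312 n313 aa_def c_def w_hw hw_nz, ((simp add: field_simps hw_nz)?), ((insert hwr rr, algebra)?))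
  have n332: "gW xi W (nabla e3 e3) e2 = 0"
    apply (rule solve2[OF id1[OF CR, of e3 e3 e2]])
    unfolding defs by (simp add: SIM defs n111 n112 n113 n211 n212 n213 n311 n312 n313 aa_def c_def w_hw hw_nz, ((simp add: field_simps hw_nz)?), ((insert hwr rr, algebra)?))
  have n333: "gW xi W (nabla e3 e3) e3 = -f3/2*a"
    apply (rule solve2[OF id1[OF CR, of e3 e3 e3]])
    unfolding defs by (simp add: SIM defs n111 n112 n113 n211 n212 n213 n311 n312 n313 aa_def c_def w_hw hw_nz, ((simp add: field_simps hw_nz)?), ((insert hwr rr, algebra)?))
  show ?thesis
    apply (intro conjI)
    apply (rule guniq; simp add: g_scale1 g_add1 g_diff1 g_neg1 gon n111 n112 n113)
    apply (rule guniq; simp add: g_scale1 g_add1 g_diff1 g_neg1 gon n121 n122 n123)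
    apply (rule guniq; simp add: g_scale1 g_add1 g_diff1 g_neg1 gon n211 n212 n213)
    apply (rule guniq; simp add: g_scale1 g_add1 g_diff1 g_neg1 gon n221 n222 n223)
    apply (rule tors[OF CR])
    apply (rule guniq; simp add: g_scale1 g_add1 g_diff1 g_neg1 gon n311 n312 n313)
    apply (rule tors[OF CR])
    apply (rule guniq; simp add: g_scale1 g_add1 g_diff1 g_neg1 gon n231 n232 n233)
    apply (rule guniq; simp add: g_scale1 g_add1 g_diff1 g_neg1 gon n331 n332 n333)
    done
qed

end


theorem mainTheorem12:
  fixes xi :: real and W :: "real^3" and nabla :: "real^3 \<Rightarrow> real^3 \<Rightarrow> real^3"
  assumes xi: "0 < xi" "xi < 1"
    and W1: "W \<bullet> W = 1"
    and WZ: "W \<notin> span {hZ}"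
    and CR: "chern_rund xi W nabla"
  shows "let E1 = bmE1 xi W; E2 = bmE2 xi W; E3 = cross3 W E2;
             w = sqrt (osc xi W W W);
             a = X0 xi \<bullet> E2;
             f1 = osc xi W (hbr E3 E1) W;
             f2 = 1/2 * (osc xi W (hbr E3 W) E2 + osc xi W (hbr E3 E2) W
                         - osc xi W (hbr E3 W) W * a);
             f3 = 1/2 * (osc xi W (hbr E3 W) E2 + osc xi W (hbr E2 E3) W
                         - osc xi W (hbr E3 W) W * a);
             f4 = - f1 / w - f2 * a + 3 * w / 4 * a;
             f5 = osc xi W (hbr E2 E3) E2 - 3/2 * f3 * a
         in nabla E1 E1 = (f1 / w) *\<^sub>R E3
          \<and> nabla E1 E2 = (f2 / w) *\<^sub>R E3
          \<and> nabla E2 E1 = (f2 / w) *\<^sub>R E3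
          \<and> nabla E2 E2 = f4 *\<^sub>R E3
          \<and> nabla E3 E1 = nabla E1 E3 + hbr E3 E1
          \<and> nabla E3 E1 = (f3 / w) *\<^sub>R E2
          \<and> nabla E2 E3 = nabla E3 E2 + hbr E2 E3
          \<and> nabla E2 E3 = (- f2 / w) *\<^sub>R E1 + f5 *\<^sub>R E2
          \<and> nabla E3 E3 = (- f3 / 2 * a) *\<^sub>R E3"
proof -
  have rp: "rho W > 0"
  proof (rule ccontr)
    assume "\<not> rho W > 0"
    then have "(W$1)^2 + (W$2)^2 \<le> 0" unfolding rho_def by simp
    then have "W$1 = 0" "W$2 = 0" by (simp_all add: sum_power2_le_zero_iff)
    then have "W = (W$3) *\<^sub>R hZ" unfolding hZ_def by (simp add: vec_eq_iff forall_3 axis_def)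
    then have "W \<in> span {hZ}" by (metis span_base span_mul singletonI scaleR_conv_of_real)
    then show False using WZ by simp
  qed
  interpret frm2 W xi
    by unfold_locales (use W1 rp xi in auto)
  show ?thesis
    unfolding Let_def osc_eq[OF W1] bmE1_eq bmE2_eq cross_e2 sqrt_gWW
    by (rule main_loc[OF CR])
qed

end
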